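(* Let $(X_m)_{m\in\mathbb Z}$ and $(Y_m)_{m\in\mathbb Z}$ be homogeneous second order recurrence sequences with constant coefficients that possess the same recurrence relation. Suppose $Y_m\neq 0$ for all integers $m$, and that the sequences $\{X_m\}$ and $\{Y_m\}$ have at most three members in common. Then for all integers $a,b,c,d,e,m$, $$(X_{d-a}Y_{e-b}-X_{e-a}Y_{d-b})X_{m-c}=(X_{d-c}Y_{e-b}-X_{e-c}Y_{d-b})X_{m-a}+(X_{d-a}X_{e-c}-X_{e-a}X_{d-c})Y_{m-b}.$$
   Context: A homogeneous second order recurrence sequence with constant coefficients is a sequence $(X_m)_{m\in\mathbb Z}$ of complex numbers for which there are constants $p,q\in\mathbb C$, $q\neq 0$, with $X_m=pX_{m-1}+qX_{m-2}$ for all $m\in\mathbb Z$. Two such sequences possess the same recurrence relation if they satisfy it with the same constants $p,q$. *)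

theory Defs
  imports Complex_Main
begin

definition hom2rec :: "complex \<Rightarrow> complex \<Rightarrow> (int \<Rightarrow> complex) \<Rightarrow> bool" where
  "hom2rec p q X \<longleftrightarrow> q \<noteq> 0 \<and> (\<forall>m::int. X m = p * X (m - 1) + q * X (m - 2))"

end

theory Submission
  imports Defs
begin

lemma hom2rec_shift: "hom2rec p q f \<Longrightarrow> hom2rec p q (\<lambda>m. f (m - c))"
  unfolding hom2rec_def by (metis diff_diff_eq add.commute)

definition P2 :: "complex \<Rightarrow> complex \<Rightarrow> int \<Rightarrow> bool" where
  "P2 p q n \<longleftrightarrow> (\<exists>a b. \<forall>f. hom2rec p q f \<longrightarrow> f n = a * f 0 + b * f 1)"

lemma P2_all:
  assumes q: "q \<noteq> 0"
  shows "P2 p q n \<and> P2 p q (n+1)"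
proof (induct n rule: int_induct[where k=0])
  case base
  show ?case unfolding P2_def
    by (metis add_0 mult_1 mult_zero_left add.right_neutral)
next
  case (step1 i)
  then obtain a b a' b' where h1: "\<forall>f. hom2rec p q f \<longrightarrow> f i = a * f 0 + b * f 1"
    and h2: "\<forall>f. hom2rec p q f \<longrightarrow> f (i+1) = a' * f 0 + b' * f 1"
    unfolding P2_def by blast
  have "P2 p q (i+1+1)" unfolding P2_def
  proof (intro exI allI impI)
    fix f assume f: "hom2rec p q f"
    have "f (i+1+1) = p * f (i+1) + q * f i"
      using f unfolding hom2rec_def by (metis add_diff_cancel_right' diff_diff_eq one_add_one)
    also have "\<dots> = (p*a' + q*a) * f 0 + (p*b' + q*b) * f 1"
      using h1[rule_format, OF f] h2[rule_format, OF f] by (simp add: algebra_simps)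
    finally show "f (i+1+1) = (p*a' + q*a) * f 0 + (p*b' + q*b) * f 1" .
  qed
  then show ?case using step1 by simp
next
  case (step2 i)
  then obtain a b a' b' where h1: "\<forall>f. hom2rec p q f \<longrightarrow> f i = a * f 0 + b * f 1"
    and h2: "\<forall>f. hom2rec p q f \<longrightarrow> f (i+1) = a' * f 0 + b' * f 1"
    unfolding P2_def by blast
  have "P2 p q (i-1)" unfolding P2_def
  proof (intro exI allI impI)
    fix f assume f: "hom2rec p q f"
    have "f (i+1) = p * f i + q * f (i-1)"
      using f unfolding hom2rec_def by (metis add_diff_cancel_right' diff_diff_eq one_add_one)
    then have "f (i-1) = (f (i+1) - p * f i) / q" using q by (simp add: field_simps)
    also have "\<dots> = ((a' - p*a)/q) * f 0 + ((b' - p*b)/q) * f 1"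
      using h1[rule_format, OF f] h2[rule_format, OF f] q by (simp add: field_simps)
    finally show "f (i-1) = ((a' - p*a)/q) * f 0 + ((b' - p*b)/q) * f 1" .
  qed
  then show ?case using step2 by simp
qed

theorem lemma7:
  fixes X Y :: "int \<Rightarrow> complex" and p q :: complex
  assumes "hom2rec p q X" and "hom2rec p q Y"
    and "\<forall>m. Y m \<noteq> 0"
    and "finite (range X \<inter> range Y)" and "card (range X \<inter> range Y) \<le> 3"
  shows "\<forall>a b c d e m :: int.
    (X (d - a) * Y (e - b) - X (e - a) * Y (d - b)) * X (m - c) =
      (X (d - c) * Y (e - b) - X (e - c) * Y (d - b)) * X (m - a)
      + (X (d - a) * X (e - c) - X (e - a) * X (d - c)) * Y (m - b)"
proof (intro allI)
  fix a b c d e m :: int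
  have q: "q \<noteq> 0" using assms(1) unfolding hom2rec_def by simp
  have "\<forall>n. \<exists>ab. \<forall>f. hom2rec p q f \<longrightarrow> f n = fst ab * f 0 + snd ab * f 1"
    using P2_all[OF q] unfolding P2_def by fastforce
  then obtain C where C: "\<And>n f. hom2rec p q f \<Longrightarrow> f n = fst (C n) * f 0 + snd (C n) * f 1"
    by metis
  have S: "\<And>f s n. hom2rec p q f \<Longrightarrow> f (n - s) = fst (C n) * f (- s) + snd (C n) * f (1 - s)"
    using C[OF hom2rec_shift] by (metis diff_0)
  let ?A = "\<lambda>n. fst (C n)" and ?B = "\<lambda>n. snd (C n)"
  have key: "\<And>(xa0::complex) xa1 xc0 xc1 yb0 yb1 Ad Ae Am Bd Be Bm.
    ((Ad*xa0+Bd*xa1) * (Ae*yb0+Be*yb1) - (Ae*xa0+Be*xa1) * (Ad*yb0+Bd*yb1)) * (Am*xc0+Bm*xc1) =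
    ((Ad*xc0+Bd*xc1) * (Ae*yb0+Be*yb1) - (Ae*xc0+Be*xc1) * (Ad*yb0+Bd*yb1)) * (Am*xa0+Bm*xa1)
    + ((Ad*xa0+Bd*xa1) * (Ae*xc0+Be*xc1) - (Ae*xa0+Be*xa1) * (Ad*xc0+Bd*xc1)) * (Am*yb0+Bm*yb1)"
    by (simp add: algebra_simps)
  show "(X (d - a) * Y (e - b) - X (e - a) * Y (d - b)) * X (m - c) =
      (X (d - c) * Y (e - b) - X (e - c) * Y (d - b)) * X (m - a)
      + (X (d - a) * X (e - c) - X (e - a) * X (d - c)) * Y (m - b)"
    using key[of "fst (C d)" "X (-a)" "snd (C d)" "X (1-a)" "fst (C e)" "Y (-b)" "snd (C e)" "Y (1-b)"
       "fst (C m)" "X (-c)" "snd (C m)" "X (1-c)"]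
    S[OF assms(1), of d a] S[OF assms(1), of e a] S[OF assms(1), of m a]
    S[OF assms(1), of d c] S[OF assms(1), of e c] S[OF assms(1), of m c]
    S[OF assms(2), of d b] S[OF assms(2), of e b] S[OF assms(2), of m b]
    by (simp only:)
qed

end
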